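(* Let $\tau\in F_2$ and let $Z=X+\tau Y\in\mathbb{C}^2$ with $X=(x_1,x_2),Y=(y_1,y_2)\in\mathbb{R}^2$, $(X,Y)\ne(0,0)$, $\|(X,Y)\|:=\max\{|x_1|,|x_2|,|y_1|,|y_2|\}\le\frac12$, and $\theta_{a,b}(Z,\tau)\neq 0$ for $a=(\tfrac12,\tfrac12)$, $b=(0,\tfrac12)$. Put $\Lambda(Z)=-\log\big(|\theta_{a,b}(Z,\tau)|\,e^{-\pi\,{}^t\operatorname{Im}Z(\operatorname{Im}\tau)^{-1}\operatorname{Im}Z}\big)$ and $\delta(a+Y)=\min\{d(\tfrac12+y_1,\mathbb{Z}),d(\tfrac12+y_2,\mathbb{Z})\}$. Then $$\Lambda(Z)\ge \pi\big(\operatorname{Tr}(\operatorname{Im}\tau)-2\operatorname{Im}\tau_{12}\big)\delta(a+Y)^2-\log\Big(4+\frac32\operatorname{Tr}(\operatorname{Im}\tau)\Big)+\log\frac{1}{\|(X,Y)\|}-\log C_3(Y),$$ where $C_3(Y)=\max_{i\in\{1,2\}}8\pi\Big(\frac4\pi+2|y_i|+\frac12\Big(\sqrt{y_i^2+\frac8\pi}+2\Big)^2+\frac12\Big)$ (in particular $C_3(Y)\le 239{,}2$).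
   Context: $F_2$ is the standard Siegel fundamental domain for $\mathrm{Sp}_4(\mathbb{Z})$ acting on symmetric complex $2\times2$ matrices $\tau=\begin{pmatrix}\tau_1&\tau_{12}\\ \tau_{12}&\tau_2\end{pmatrix}$ with $\operatorname{Im}\tau>0$; every $\tau\in F_2$ satisfies $|\operatorname{Re}\tau_{ij}|\le 1/2$, $\operatorname{Im}\tau_2\ge\operatorname{Im}\tau_1\ge 2\operatorname{Im}\tau_{12}\ge 0$, $\operatorname{Im}\tau_1\ge\sqrt3/2$. Theta function with characteristic $a,b\in\{0,\frac12\}^2$: $\theta_{a,b}(Z,\tau)=\sum_{n\in\mathbb{Z}^2}\exp\big(2i\pi(\tfrac12{}^t(n+a)\tau(n+a)+{}^t(n+a)(Z+b))\big)$. $d(x,\mathbb{Z})$ is the distance from $x$ to the nearest integer. *)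

theory Defs
  imports "HOL-Analysis.Analysis"
begin

definition ImM :: "complex^2^2 \<Rightarrow> real^2^2" where
  "ImM \<tau> = (\<chi> i j. Im (\<tau> $ i $ j))"

definition ReM :: "complex^2^2 \<Rightarrow> real^2^2" where
  "ReM \<tau> = (\<chi> i j. Re (\<tau> $ i $ j))"

definition ImV :: "complex^2 \<Rightarrow> real^2" where
  "ImV z = (\<chi> i. Im (z $ i))"

definition pos_def_real :: "real^2^2 \<Rightarrow> bool" where
  "pos_def_real Y \<longleftrightarrow> (\<forall>v. v \<noteq> 0 \<longrightarrow> v \<bullet> (Y *v v) > 0)"

definition siegel_upper :: "complex^2^2 \<Rightarrow> bool" where
  "siegel_upper \<tau> \<longleftrightarrow> transpose \<tau> = \<tau> \<and> pos_def_real (ImM \<tau>)"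

text \<open>Block description of \<open>M = (A B; C D) \<in> Sp_4(\<int>)\<close>: this is \<open>M^t J M = J\<close> unfolded.\<close>
definition Sp4Z_blocks :: "int^2^2 \<Rightarrow> int^2^2 \<Rightarrow> int^2^2 \<Rightarrow> int^2^2 \<Rightarrow> bool" where
  "Sp4Z_blocks A B C D \<longleftrightarrow>
     transpose A ** C = transpose C ** A \<and>
     transpose B ** D = transpose D ** B \<and>
     transpose A ** D - transpose C ** B = mat 1"

definition cmat :: "int^2^2 \<Rightarrow> complex^2^2" where
  "cmat M = (\<chi> i j. of_int (M $ i $ j))"

text \<open>Siegel's fundamental domain \<open>F_2\<close>: (i) \<open>|det(C\<tau>+D)| \<ge> 1\<close> for all
  \<open>(A B; C D) \<in> Sp_4(\<int>)\<close>; (ii) \<open>Im \<tau>\<close> Minkowski reduced; (iii) \<open>|Re \<tau>_ij| \<le> 1/2\<close>.\<close>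
definition F2 :: "(complex^2^2) set" where
  "F2 = {\<tau>. siegel_upper \<tau> \<and>
     (\<forall>A B C D. Sp4Z_blocks A B C D \<longrightarrow> cmod (det (cmat C ** \<tau> + cmat D)) \<ge> 1) \<and>
     (\<forall>i j. \<bar>Re (\<tau> $ i $ j)\<bar> \<le> 1/2) \<and>
     Im (\<tau> $ 2 $ 2) \<ge> Im (\<tau> $ 1 $ 1) \<and> Im (\<tau> $ 1 $ 1) \<ge> 2 * Im (\<tau> $ 1 $ 2) \<and>
     2 * Im (\<tau> $ 1 $ 2) \<ge> 0}"

definition theta :: "real^2 \<Rightarrow> real^2 \<Rightarrow> complex^2 \<Rightarrow> complex^2^2 \<Rightarrow> complex" where
  "theta a b Z \<tau> = infsum (\<lambda>n::int^2.
     (let w = (\<lambda>i. of_int (n $ i) + complex_of_real (a $ i)) in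
      exp (2 * pi * \<i> * ((1/2) * (\<Sum>i\<in>UNIV. \<Sum>j\<in>UNIV. w i * \<tau> $ i $ j * w j)
                         + (\<Sum>i\<in>UNIV. w i * (Z $ i + complex_of_real (b $ i))))))) UNIV"

definition dZ :: "real \<Rightarrow> real" where
  "dZ x = infdist x \<int>"

definition C3 :: "real^2 \<Rightarrow> real" where
  "C3 Y = Max ((\<lambda>i. 8 * pi * (4 / pi + 2 * \<bar>Y $ i\<bar>
        + (1/2) * (sqrt ((Y $ i)^2 + 8 / pi) + 2)^2 + 1/2)) ` UNIV)"

end

theory Submission
  imports Defs
begin


lemma geo_fin_le:
  fixes x :: real assumes "0 \<le> x" "x < 1" "finite N"
  shows "(\<Sum>n\<in>N. x ^ n) \<le> 1 / (1 - x)"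
proof -
  obtain M where M: "N \<subseteq> {..<M}"
    using assms(3) finite_nat_bounded by blast
  have "(\<Sum>n\<in>N. x ^ n) \<le> (\<Sum>n<M. x ^ n)"
    by (rule sum_mono2) (use M assms in auto)
  also have "\<dots> = (1 - x ^ M) / (1 - x)"
    using assms by (simp add: sum_gp_strict)
  also have "\<dots> \<le> 1 / (1 - x)"
    using assms by (simp add: divide_right_mono)
  finally show ?thesis .
qed

lemma ngeo_closed:
  fixes x :: real
  shows "(\<Sum>n<M. real n * x ^ n) * (1 - x)^2 = x - real M * x ^ M + (real M - 1) * x ^ (M+1)"
proof (induction M)
  case 0 then show ?case by simp
next
  case (Suc M)
  have "(\<Sum>n<Suc M. real n * x ^ n) * (1 - x)^2 = (\<Sum>n<M. real n * x ^ n) * (1 - x)^2 + real M * x^M * (1-x)^2"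
    by (simp add: algebra_simps)
  also have "\<dots> = x - real (Suc M) * x ^ (Suc M) + (real (Suc M) - 1) * x ^ (Suc M+1)"
    unfolding Suc.IH by (simp add: algebra_simps power2_eq_square)
  finally show ?case .
qed

lemma ngeo_fin_le:
  fixes x :: real assumes "0 \<le> x" "x < 1" "finite N"
  shows "(\<Sum>n\<in>N. real n * x ^ n) \<le> x / (1 - x)^2"
proof -
  obtain M where M: "N \<subseteq> {..<M}"
    using assms(3) finite_nat_bounded by blast
  have "(\<Sum>n\<in>N. real n * x ^ n) \<le> (\<Sum>n<M. real n * x ^ n)"
    by (rule sum_mono2) (use M assms in auto)
  also have "\<dots> = (x - real M * x ^ M + (real M - 1) * x ^ (M+1)) / (1 - x)^2"
    using ngeo_closed[of x M] assms by (simp add: field_simps)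
  also have "\<dots> \<le> x / (1 - x)^2"
  proof -
    have "(real M - 1) * x ^ (M+1) \<le> real M * x ^ M"
    proof -
      have "(real M - 1) * x ^ (M+1) \<le> real M * x ^ (M+1)" using assms by (intro mult_right_mono) auto
      also have "\<dots> \<le> real M * x ^ M"
        using assms by (intro mult_left_mono) (auto simp: power_le_one mult_left_le_one_le)
      finally show ?thesis .
    qed
    then show ?thesis using assms by (intro divide_right_mono) auto
  qed
  finally show ?thesis .
qed



lemma exp_nat_bound:
  fixes c :: real assumes q: "exp (-pi*c) \<le> 3/10"
  shows "exp (-pi*c*real k) \<le> (3/10)^k"
proof -
  have "exp (-pi*c*real k) = exp (-pi*c)^k"
    by (metis exp_of_nat_mult mult.commute)
  also have "\<dots> \<le> (3/10)^k" using q by (intro power_mono) auto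
  finally show ?thesis .
qed

lemma term_pos:
  fixes c e :: real and j :: int
  assumes q: "exp (-pi*c) \<le> 3/10" and e: "0 \<le> e" "e \<le> 1/2" and j: "0 \<le> j"
  shows "exp (-pi*c*(of_int j + e)^2) \<le> exp (-pi*c*e^2) * (3/10)^(nat j)"
proof -
  have c: "c > 0"
  proof (rule ccontr)
    assume "\<not> c > 0" then have "-pi*c \<ge> 0" by (simp add: mult_nonneg_nonpos2 mult_le_0_iff)
    then have "exp (-pi*c) \<ge> 1" by simp
    then show False using q by linarith
  qed
  have jj: "real_of_int j = real (nat j)" using j by simp
  have "real (nat j) \<le> (real (nat j))^2"
    by (cases "nat j") (auto simp: power2_eq_square)
  moreover have "0 \<le> e * real (nat j)" using e by simp
  ultimately have h: "(of_int j + e)^2 \<ge> e^2 + real (nat j)"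
    unfolding jj by (simp add: power2_eq_square algebra_simps)
  have "exp (-pi*c*(of_int j + e)^2) \<le> exp (-pi*c*(e^2 + real (nat j)))"
    using h c by (simp add: mult_left_mono)
  also have "\<dots> = exp (-pi*c*e^2) * exp (-pi*c*real (nat j))"
    by (simp add: algebra_simps exp_add[symmetric])
  also have "\<dots> \<le> exp (-pi*c*e^2) * (3/10)^(nat j)"
    by (intro mult_left_mono exp_nat_bound q) auto
  finally show ?thesis .
qed

lemma term_neg:
  fixes c e :: real and j :: int
  assumes q: "exp (-pi*c) \<le> 3/10" and e: "0 \<le> e" "e \<le> 1/2" and j: "j < 0"
  shows "exp (-pi*c*(of_int j + e)^2) \<le> exp (-pi*c*e^2) * (9/100)^(nat (-j-1))"
proof -
  have c: "c > 0"
  proof (rule ccontr)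
    assume "\<not> c > 0" then have "-pi*c \<ge> 0" by (simp add: mult_nonneg_nonpos2 mult_le_0_iff)
    then have "exp (-pi*c) \<ge> 1" by simp
    then show False using q by linarith
  qed
  define k where "k = nat (-j-1)"
  have jj: "real_of_int j = - real k - 1" using j by (simp add: k_def)
  have "real k \<le> real k * real k" by (metis of_nat_mult of_nat_le_iff le_square)
  moreover have "(2*e) * (real k + 1) \<le> 1 * (real k + 1)"
    using e by (intro mult_right_mono) auto
  ultimately have h: "(of_int j + e)^2 \<ge> e^2 + real (2*k)"
    unfolding jj by (simp add: power2_eq_square algebra_simps)
  have "exp (-pi*c*(of_int j + e)^2) \<le> exp (-pi*c*(e^2 + real (2*k)))"
    using h c by (simp add: mult_left_mono)
  also have "\<dots> = exp (-pi*c*e^2) * exp (-pi*c*real (2*k))"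
    by (simp add: algebra_simps exp_add[symmetric])
  also have "\<dots> \<le> exp (-pi*c*e^2) * (3/10)^(2*k)"
    by (intro mult_left_mono exp_nat_bound q) auto
  also have "(3/10::real)^(2*k) = (9/100)^k" by (simp add: power_mult power2_eq_square)
  finally show ?thesis by (simp add: k_def)
qed

lemma S0_pos:
  fixes c e :: real and J :: "int set"
  assumes q: "exp (-pi*c) \<le> 3/10" and e: "0 \<le> e" "e \<le> 1/2" and J: "finite J"
  shows "(\<Sum>j\<in>J. exp (-pi*c*(of_int j + e)^2)) \<le> exp (-pi*c*e^2) * (230/91)"
proof -
  let ?E = "exp (-pi*c*e^2)"
  let ?f = "\<lambda>j::int. exp (-pi*c*(of_int j + e)^2)"
  define J1 where "J1 = J \<inter> {0..}"
  define J2 where "J2 = J - {0..}"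
  have fin: "finite J1" "finite J2" using J by (auto simp: J1_def J2_def)
  have split: "sum ?f J = sum ?f J1 + sum ?f J2"
    unfolding J1_def J2_def using J by (rule sum.Int_Diff)
  have "sum ?f J1 \<le> (\<Sum>j\<in>J1. ?E * (3/10)^(nat j))"
    by (rule sum_mono, rule term_pos[OF q e]) (auto simp: J1_def)
  also have "\<dots> = ?E * (\<Sum>j\<in>J1. (3/10::real)^(nat j))" by (simp add: sum_distrib_left)
  also have "(\<Sum>j\<in>J1. (3/10::real)^(nat j)) = (\<Sum>n\<in>nat ` J1. (3/10)^n)"
    by (subst sum.reindex) (auto simp: inj_on_def J1_def)
  also have "\<dots> \<le> 1/(1-3/10)" by (rule geo_fin_le) (use fin in auto)
  finally have s1: "sum ?f J1 \<le> ?E * (10/7)" by simp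
  have "sum ?f J2 \<le> (\<Sum>j\<in>J2. ?E * (9/100)^(nat (-j-1)))"
    by (rule sum_mono, rule term_neg[OF q e]) (auto simp: J2_def)
  also have "\<dots> = ?E * (\<Sum>j\<in>J2. (9/100::real)^(nat (-j-1)))" by (simp add: sum_distrib_left)
  also have "(\<Sum>j\<in>J2. (9/100::real)^(nat (-j-1))) = (\<Sum>n\<in>(\<lambda>j. nat (-j-1)) ` J2. (9/100)^n)"
    by (subst sum.reindex) (auto simp: inj_on_def J2_def)
  also have "\<dots> \<le> 1/(1-9/100)" by (rule geo_fin_le) (use fin in auto)
  finally have s2: "sum ?f J2 \<le> ?E * (100/91)" by simp
  have eq: "?E*(10/7) + ?E*(100/91) = ?E*(230/91)"
    by (subst distrib_left[symmetric]) simp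
  show ?thesis using s1 s2 split eq by linarith
qed

lemma S1_pos:
  fixes c e :: real and J :: "int set"
  assumes q: "exp (-pi*c) \<le> 3/10" and e: "0 \<le> e" "e \<le> 1/2" and J: "finite J"
  shows "(\<Sum>j\<in>J. \<bar>of_int j + e\<bar> * exp (-pi*c*(of_int j + e)^2))
      \<le> exp (-pi*c*e^2) * (30/49 + 5/7 + 10000/8281)"
proof -
  let ?E = "exp (-pi*c*e^2)"
  let ?f = "\<lambda>j::int. \<bar>of_int j + e\<bar> * exp (-pi*c*(of_int j + e)^2)"
  define J1 where "J1 = J \<inter> {0..}"
  define J2 where "J2 = J - {0..}"
  have fin: "finite J1" "finite J2" using J by (auto simp: J1_def J2_def)
  have split: "sum ?f J = sum ?f J1 + sum ?f J2"
    unfolding J1_def J2_def using J by (rule sum.Int_Diff)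
  have "sum ?f J1 \<le> (\<Sum>j\<in>J1. (real (nat j) + 1/2) * (?E * (3/10)^(nat j)))"
  proof (intro sum_mono mult_mono term_pos q e)
    fix j assume "j \<in> J1" then show "\<bar>of_int j + e\<bar> \<le> real (nat j) + 1/2"
      using e by (auto simp: J1_def)
  qed (auto simp: J1_def)
  also have "\<dots> = ?E * ((\<Sum>j\<in>J1. real (nat j) * (3/10::real)^(nat j)) + 1/2 * (\<Sum>j\<in>J1. (3/10::real)^(nat j)))"
    by (simp add: sum_distrib_left sum.distrib algebra_simps)
  also have "(\<Sum>j\<in>J1. (3/10::real)^(nat j)) = (\<Sum>n\<in>nat ` J1. (3/10)^n)"
    by (subst sum.reindex) (auto simp: inj_on_def J1_def)
  also have "(\<Sum>j\<in>J1. real (nat j) * (3/10::real)^(nat j)) = (\<Sum>n\<in>nat ` J1. real n * (3/10)^n)"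
    by (subst sum.reindex) (auto simp: inj_on_def J1_def)
  finally have s1: "sum ?f J1 \<le> ?E * ((\<Sum>n\<in>nat ` J1. real n * (3/10)^n) + 1/2 * (\<Sum>n\<in>nat ` J1. (3/10)^n))" .
  have g1: "(\<Sum>n\<in>nat ` J1. real n * (3/10::real)^n) \<le> (3/10)/(1-3/10)^2"
    by (rule ngeo_fin_le) (use fin in auto)
  have g2: "(\<Sum>n\<in>nat ` J1. (3/10::real)^n) \<le> 1/(1-3/10)"
    by (rule geo_fin_le) (use fin in auto)
  have "(\<Sum>n\<in>nat ` J1. real n * (3/10)^n) + 1/2 * (\<Sum>n\<in>nat ` J1. (3/10::real)^n) \<le> 30/49 + 5/7"
    using g1 g2 by (simp add: power2_eq_square)
  then have s1': "sum ?f J1 \<le> ?E * (30/49 + 5/7)"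
    using s1 by (meson exp_ge_zero mult_left_mono order_trans)
  have "sum ?f J2 \<le> (\<Sum>j\<in>J2. (real (nat (-j-1)) + 1) * (?E * (9/100)^(nat (-j-1))))"
  proof (intro sum_mono mult_mono term_neg q e)
    fix j assume "j \<in> J2" then show "\<bar>of_int j + e\<bar> \<le> real (nat (-j-1)) + 1"
      using e by (auto simp: J2_def)
  qed (auto simp: J2_def)
  also have "\<dots> = ?E * ((\<Sum>j\<in>J2. real (nat (-j-1)) * (9/100::real)^(nat (-j-1))) + (\<Sum>j\<in>J2. (9/100::real)^(nat (-j-1))))"
    by (simp add: sum_distrib_left sum.distrib algebra_simps)
  also have "(\<Sum>j\<in>J2. (9/100::real)^(nat (-j-1))) = (\<Sum>n\<in>(\<lambda>j. nat (-j-1)) ` J2. (9/100)^n)"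
    by (subst sum.reindex) (auto simp: inj_on_def J2_def)
  also have "(\<Sum>j\<in>J2. real (nat (-j-1)) * (9/100::real)^(nat (-j-1))) = (\<Sum>n\<in>(\<lambda>j. nat (-j-1)) ` J2. real n * (9/100)^n)"
    by (subst sum.reindex) (auto simp: inj_on_def J2_def)
  finally have s2: "sum ?f J2 \<le> ?E * ((\<Sum>n\<in>(\<lambda>j. nat (-j-1)) ` J2. real n * (9/100)^n) + (\<Sum>n\<in>(\<lambda>j. nat (-j-1)) ` J2. (9/100)^n))" .
  have g3: "(\<Sum>n\<in>(\<lambda>j. nat (-j-1)) ` J2. real n * (9/100::real)^n) \<le> (9/100)/(1-9/100)^2"
    by (rule ngeo_fin_le) (use fin in auto)
  have g4: "(\<Sum>n\<in>(\<lambda>j. nat (-j-1)) ` J2. (9/100::real)^n) \<le> 1/(1-9/100)"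
    by (rule geo_fin_le) (use fin in auto)
  have "(\<Sum>n\<in>(\<lambda>j. nat (-j-1)) ` J2. real n * (9/100)^n) + (\<Sum>n\<in>(\<lambda>j. nat (-j-1)) ` J2. (9/100::real)^n) \<le> 10000/8281"
    using g3 g4 by (simp add: power2_eq_square)
  then have s2': "sum ?f J2 \<le> ?E * (10000/8281)"
    using s2 by (meson exp_ge_zero mult_left_mono order_trans)
  have eq: "?E*(30/49 + 5/7) + ?E*(10000/8281) = ?E*(30/49 + 5/7 + 10000/8281)"
    by (subst distrib_left[symmetric]) simp
  show ?thesis using s1' s2' split eq by linarith
qed



lemma c_pos_of_q: assumes q: "exp (-pi*c) \<le> 3/10" shows "c > 0"
proof (rule ccontr)
  assume "\<not> c > 0" then have "-pi*c \<ge> 0" by (simp add: mult_nonneg_nonpos2 mult_le_0_iff)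
  then have "exp (-pi*c) \<ge> 1" by simp
  then show False using q by linarith
qed

lemma dZ_le: "dZ x \<le> \<bar>x - of_int r\<bar>"
proof -
  have "of_int r \<in> (\<int>::real set)" by simp
  then have "infdist x \<int> \<le> dist x (of_int r)" by (rule infdist_le)
  then show ?thesis by (simp add: dZ_def dist_real_def)
qed

lemma dZ_nonneg: "dZ x \<ge> 0" by (simp add: dZ_def infdist_nonneg)

lemma exp_dZ_mono:
  assumes "c \<ge> 0" "dZ x \<le> \<bar>e\<bar>"
  shows "exp (-pi*c*e^2) \<le> exp (-pi*c*(dZ x)^2)"
proof -
  have "(dZ x)^2 \<le> e^2" using assms dZ_nonneg[of x]
    by (metis abs_le_square_iff abs_of_nonneg)
  then show ?thesis using assms by (simp add: mult_left_mono)
qed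

lemma S_gen:
  fixes c \<alpha> :: real and K :: "int set"
  assumes q: "exp (-pi*c) \<le> 3/10" and K: "finite K"
  shows "(\<Sum>k\<in>K. exp (-pi*c*(of_int k + \<alpha>)^2)) \<le> exp (-pi*c*(dZ \<alpha>)^2) * (230/91)"
    and "(\<Sum>k\<in>K. \<bar>of_int k + \<alpha>\<bar> * exp (-pi*c*(of_int k + \<alpha>)^2))
            \<le> exp (-pi*c*(dZ \<alpha>)^2) * (30/49 + 5/7 + 10000/8281)"
proof -
  have c: "c \<ge> 0" using c_pos_of_q[OF q] by simp
  define r where "r = \<lfloor>\<alpha> + 1/2\<rfloor>"
  define e where "e = \<alpha> - of_int r"
  have e1: "-1/2 \<le> e" "e < 1/2" unfolding e_def r_def
    using floor_correct[of "\<alpha> + 1/2"] by linarith+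
  have dz: "dZ \<alpha> \<le> \<bar>e\<bar>" unfolding e_def by (rule dZ_le)
  have ex: "exp (-pi*c*e^2) \<le> exp (-pi*c*(dZ \<alpha>)^2)" by (rule exp_dZ_mono[OF c dz])
  have "(\<Sum>k\<in>K. exp (-pi*c*(of_int k + \<alpha>)^2)) \<le> exp (-pi*c*e^2) * (230/91)
    \<and> (\<Sum>k\<in>K. \<bar>of_int k + \<alpha>\<bar> * exp (-pi*c*(of_int k + \<alpha>)^2))
            \<le> exp (-pi*c*e^2) * (30/49 + 5/7 + 10000/8281)"
  proof (cases "e \<ge> 0")
    case True
    have inj: "inj_on (\<lambda>k. k + r) K" by (auto simp: inj_on_def)
    have eqk: "\<And>k. of_int k + \<alpha> = of_int (k + r) + e" by (simp add: e_def)
    have s0: "(\<Sum>k\<in>K. exp (-pi*c*(of_int k + \<alpha>)^2)) = (\<Sum>j\<in>(\<lambda>k. k + r) ` K. exp (-pi*c*(of_int j + e)^2))"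
      by (subst sum.reindex[OF inj]) (simp add: eqk)
    have s1: "(\<Sum>k\<in>K. \<bar>of_int k + \<alpha>\<bar> * exp (-pi*c*(of_int k + \<alpha>)^2)) = (\<Sum>j\<in>(\<lambda>k. k + r) ` K. \<bar>of_int j + e\<bar> * exp (-pi*c*(of_int j + e)^2))"
      by (subst sum.reindex[OF inj]) (simp add: eqk)
    show ?thesis unfolding s0 s1 using S0_pos[OF q True] S1_pos[OF q True] e1 K by auto
  next
    case False
    have inj: "inj_on (\<lambda>k. - k - r) K" by (auto simp: inj_on_def)
    have eqk: "\<And>k. (of_int k + \<alpha>)^2 = (of_int (- k - r) + (-e))^2" by (simp add: e_def power2_eq_square algebra_simps)
    have eqk': "\<And>k. \<bar>of_int k + \<alpha>\<bar> = \<bar>of_int (- k - r) + (-e)\<bar>" by (simp add: e_def algebra_simps)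
    have s0: "(\<Sum>k\<in>K. exp (-pi*c*(of_int k + \<alpha>)^2)) = (\<Sum>j\<in>(\<lambda>k. - k - r) ` K. exp (-pi*c*(of_int j + (-e))^2))"
      by (subst sum.reindex[OF inj]) (simp add: eqk del: of_int_diff of_int_minus)
    have s1: "(\<Sum>k\<in>K. \<bar>of_int k + \<alpha>\<bar> * exp (-pi*c*(of_int k + \<alpha>)^2)) = (\<Sum>j\<in>(\<lambda>k. - k - r) ` K. \<bar>of_int j + (-e)\<bar> * exp (-pi*c*(of_int j + (-e))^2))"
      by (subst sum.reindex[OF inj]) (simp only: eqk eqk' comp_def)
    have ee: "0 \<le> -e" "-e \<le> 1/2" using False e1 by auto
    have "(-e)^2 = e^2" by simp
    then show ?thesis unfolding s0 s1 using S0_pos[OF q ee] S1_pos[OF q ee] K by auto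
  qed
  then show "(\<Sum>k\<in>K. exp (-pi*c*(of_int k + \<alpha>)^2)) \<le> exp (-pi*c*(dZ \<alpha>)^2) * (230/91)"
    and "(\<Sum>k\<in>K. \<bar>of_int k + \<alpha>\<bar> * exp (-pi*c*(of_int k + \<alpha>)^2))
            \<le> exp (-pi*c*(dZ \<alpha>)^2) * (30/49 + 5/7 + 10000/8281)"
    using ex by (meson mult_right_mono order_trans zero_le_divide_iff zero_le_numeral add_nonneg_nonneg)+
qed



lemma prod_sum_le:
  fixes F :: "(int^2) set" and f g :: "int \<Rightarrow> real"
  assumes F: "finite F" and f: "\<And>k. f k \<ge> 0" and g: "\<And>k. g k \<ge> 0"
  shows "(\<Sum>n\<in>F. f (n$1) * g (n$2)) \<le> (\<Sum>k\<in>(\<lambda>n. n$1) ` F. f k) * (\<Sum>l\<in>(\<lambda>n. n$2) ` F. g l)"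
proof -
  let ?p = "\<lambda>n::int^2. (n$1, n$2)"
  have inj: "inj_on ?p F"
  proof (rule inj_onI)
    fix x y :: "int^2" assume "?p x = ?p y"
    then show "x = y" by (simp add: vec_eq_iff forall_2)
  qed
  have "(\<Sum>n\<in>F. f (n$1) * g (n$2)) = (\<Sum>p\<in>?p ` F. f (fst p) * g (snd p))"
    by (subst sum.reindex[OF inj]) simp
  also have "\<dots> \<le> (\<Sum>p\<in>((\<lambda>n. n$1) ` F) \<times> ((\<lambda>n. n$2) ` F). f (fst p) * g (snd p))"
    by (rule sum_mono2) (use F f g in \<open>auto intro: mult_nonneg_nonneg\<close>)
  also have "\<dots> = (\<Sum>k\<in>(\<lambda>n. n$1) ` F. f k) * (\<Sum>l\<in>(\<lambda>n. n$2) ` F. g l)"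
    by (simp add: sum_product sum.cartesian_product case_prod_beta)
  finally show ?thesis .
qed

lemma two_dim_bound:
  fixes F :: "(int^2) set" and c1 c2 \<alpha>1 \<alpha>2 A :: real
  assumes F: "finite F" and q1: "exp (-pi*c1) \<le> 3/10" and q2: "exp (-pi*c2) \<le> 3/10" and A: "A \<ge> 0"
  shows "(\<Sum>n\<in>F. (A + \<bar>of_int (n$1) + \<alpha>1\<bar> + \<bar>of_int (n$2) + \<alpha>2\<bar>)
            * (exp (-pi*c1*(of_int (n$1) + \<alpha>1)^2) * exp (-pi*c2*(of_int (n$2) + \<alpha>2)^2)))
     \<le> (A * (230/91)^2 + 2 * (230/91) * (30/49 + 5/7 + 10000/8281))
         * (exp (-pi*c1*(dZ \<alpha>1)^2) * exp (-pi*c2*(dZ \<alpha>2)^2))"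
proof -
  define B0 :: real where "B0 = 230/91"
  define B1 :: real where "B1 = 30/49 + 5/7 + 10000/8281"
  define E1 where "E1 = exp (-pi*c1*(dZ \<alpha>1)^2)"
  define E2 where "E2 = exp (-pi*c2*(dZ \<alpha>2)^2)"
  define f0 where "f0 = (\<lambda>k::int. exp (-pi*c1*(of_int k + \<alpha>1)^2))"
  define f1 where "f1 = (\<lambda>k::int. \<bar>of_int k + \<alpha>1\<bar> * exp (-pi*c1*(of_int k + \<alpha>1)^2))"
  define g0 where "g0 = (\<lambda>k::int. exp (-pi*c2*(of_int k + \<alpha>2)^2))"
  define g1 where "g1 = (\<lambda>k::int. \<bar>of_int k + \<alpha>2\<bar> * exp (-pi*c2*(of_int k + \<alpha>2)^2))"
  let ?P1 = "(\<lambda>n::int^2. n$1) ` F" and ?P2 = "(\<lambda>n::int^2. n$2) ` F"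
  have fP: "finite ?P1" "finite ?P2" using F by auto
  have bf0: "sum f0 ?P1 \<le> E1 * B0" unfolding f0_def E1_def B0_def by (rule S_gen(1)[OF q1 fP(1)])
  have bf1: "sum f1 ?P1 \<le> E1 * B1" unfolding f1_def E1_def B1_def by (rule S_gen(2)[OF q1 fP(1)])
  have bg0: "sum g0 ?P2 \<le> E2 * B0" unfolding g0_def E2_def B0_def by (rule S_gen(1)[OF q2 fP(2)])
  have bg1: "sum g1 ?P2 \<le> E2 * B1" unfolding g1_def E2_def B1_def by (rule S_gen(2)[OF q2 fP(2)])
  have nn: "\<And>k. f0 k \<ge> 0" "\<And>k. f1 k \<ge> 0" "\<And>k. g0 k \<ge> 0" "\<And>k. g1 k \<ge> 0"
    by (auto simp: f0_def f1_def g0_def g1_def)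
  have nnS: "sum f0 ?P1 \<ge> 0" "sum f1 ?P1 \<ge> 0" "sum g0 ?P2 \<ge> 0" "sum g1 ?P2 \<ge> 0"
    using nn by (auto intro: sum_nonneg)
  have E12: "E1 \<ge> 0" "E2 \<ge> 0" "B0 \<ge> 0" "B1 \<ge> 0" by (auto simp: E1_def E2_def B0_def B1_def)
  have split: "(\<Sum>n\<in>F. (A + \<bar>of_int (n$1) + \<alpha>1\<bar> + \<bar>of_int (n$2) + \<alpha>2\<bar>)
            * (exp (-pi*c1*(of_int (n$1) + \<alpha>1)^2) * exp (-pi*c2*(of_int (n$2) + \<alpha>2)^2)))
     = A * (\<Sum>n\<in>F. f0 (n$1) * g0 (n$2)) + (\<Sum>n\<in>F. f1 (n$1) * g0 (n$2)) + (\<Sum>n\<in>F. f0 (n$1) * g1 (n$2))"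
    by (simp add: f0_def f1_def g0_def g1_def sum_distrib_left sum.distrib[symmetric] algebra_simps)
  have p1: "(\<Sum>n\<in>F. f0 (n$1) * g0 (n$2)) \<le> (E1*B0) * (E2*B0)"
    using prod_sum_le[OF F nn(1) nn(3)] mult_mono[OF bf0 bg0] nnS E12 by (meson order_trans mult_nonneg_nonneg)
  have p2: "(\<Sum>n\<in>F. f1 (n$1) * g0 (n$2)) \<le> (E1*B1) * (E2*B0)"
    using prod_sum_le[OF F nn(2) nn(3)] mult_mono[OF bf1 bg0] nnS E12 by (meson order_trans mult_nonneg_nonneg)
  have p3: "(\<Sum>n\<in>F. f0 (n$1) * g1 (n$2)) \<le> (E1*B0) * (E2*B1)"
    using prod_sum_le[OF F nn(1) nn(4)] mult_mono[OF bf0 bg1] nnS E12 by (meson order_trans mult_nonneg_nonneg)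
  have "A * (\<Sum>n\<in>F. f0 (n$1) * g0 (n$2)) \<le> A * ((E1*B0) * (E2*B0))"
    using p1 A by (rule mult_left_mono)
  then have "A * (\<Sum>n\<in>F. f0 (n$1) * g0 (n$2)) + (\<Sum>n\<in>F. f1 (n$1) * g0 (n$2)) + (\<Sum>n\<in>F. f0 (n$1) * g1 (n$2))
     \<le> A * ((E1*B0) * (E2*B0)) + (E1*B1) * (E2*B0) + (E1*B0) * (E2*B1)" using p2 p3 by linarith
  also have "\<dots> = (A * B0^2 + 2 * B0 * B1) * (E1 * E2)" by (simp add: algebra_simps power2_eq_square)
  finally show ?thesis unfolding split B0_def B1_def E1_def E2_def .
qed



lemma exp_diff_bound:
  fixes a b :: complex
  shows "cmod (exp a - exp b) \<le> cmod (a - b) * (exp (Re a) + exp (Re b))"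
proof -
  let ?B = "max (exp (Re a)) (exp (Re b))"
  have "cmod (exp a - exp b) \<le> ?B * cmod (a - b)"
  proof (rule field_differentiable_bound[of "closed_segment b a"])
    show "convex (closed_segment b a)" by simp
    show "\<And>z. z \<in> closed_segment b a \<Longrightarrow> (exp has_field_derivative exp z) (at z within closed_segment b a)"
      by (auto intro: has_field_derivative_at_within DERIV_exp)
    fix z assume "z \<in> closed_segment b a"
    then obtain u :: real where u: "0 \<le> u" "u \<le> 1" "z = (1 - u) *\<^sub>R b + u *\<^sub>R a"
      by (auto simp: in_segment)
    have "Re z = (1-u) * Re b + u * Re a" using u by simp
    also have "\<dots> \<le> (1-u) * max (Re a) (Re b) + u * max (Re a) (Re b)"
      using u by (intro add_mono mult_left_mono) auto
    finally have "Re z \<le> max (Re a) (Re b)" by (simp add: algebra_simps)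
    then have "exp (Re z) \<le> ?B" by (auto simp: max_def split: if_splits)
    then show "cmod (exp z) \<le> ?B" by (simp add: norm_exp_eq_Re)
  qed auto
  also have "\<dots> \<le> (exp (Re a) + exp (Re b)) * cmod (a - b)"
    by (intro mult_right_mono) auto
  finally show ?thesis by (simp add: mult.commute)
qed



lemma dZ_half: "dZ (1/2) \<ge> 1/2"
proof -
  have ne: "(\<int>::real set) \<noteq> {}" using Ints_0 by blast
  have "1/2 \<le> (INF a\<in>\<int>. dist (1/2::real) a)"
  proof (rule cINF_greatest[OF ne])
    fix x :: real assume "x \<in> \<int>"
    then obtain m where m: "x = of_int m" by (auto elim: Ints_cases)
    show "1/2 \<le> dist (1/2) x"
    proof (cases "m \<le> 0")
      case True then have "real_of_int m \<le> 0" by simp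
      then show ?thesis by (simp add: m dist_real_def)
    next
      case False then have "real_of_int m \<ge> 1" by simp
      then show ?thesis by (simp add: m dist_real_def)
    qed
  qed
  then show ?thesis by (simp add: dZ_def infdist_notempty[OF ne])
qed

lemma dZ_le_half: assumes "\<bar>y\<bar> \<le> 1/2" shows "dZ (1/2 + y) \<le> 1/2"
proof (cases "y \<ge> 0")
  case True
  have "infdist (1/2 + y) \<int> \<le> dist (1/2 + y) (of_int 1)" by (rule infdist_le) simp
  then show ?thesis using assms True by (simp add: dZ_def dist_real_def)
next
  case False
  have "infdist (1/2 + y) \<int> \<le> dist (1/2 + y) (of_int 0)" by (rule infdist_le) simp
  then show ?thesis using assms False by (simp add: dZ_def dist_real_def)
qed

lemma tau11_ge1:
  assumes "\<tau> \<in> F2" shows "cmod (\<tau>$1$1) \<ge> 1"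
proof -
  define A :: "int^2^2" where "A = (\<chi> i j. if i = j \<and> i = 2 then 1 else 0)"
  define B :: "int^2^2" where "B = (\<chi> i j. if i = j \<and> i = 1 then -1 else 0)"
  define C :: "int^2^2" where "C = (\<chi> i j. if i = j \<and> i = 1 then 1 else 0)"
  define D :: "int^2^2" where "D = (\<chi> i j. if i = j \<and> i = 2 then 1 else 0)"
  have "Sp4Z_blocks A B C D"
    unfolding Sp4Z_blocks_def A_def B_def C_def D_def
    by (simp add: vec_eq_iff forall_2 matrix_matrix_mult_def sum_2 transpose_def mat_def)
  then have "cmod (det (cmat C ** \<tau> + cmat D)) \<ge> 1" using assms by (auto simp: F2_def)
  moreover have "det (cmat C ** \<tau> + cmat D) = \<tau>$1$1"
    unfolding det_2 C_def D_def cmat_def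
    by (simp add: matrix_matrix_mult_def sum_2)
  ultimately show ?thesis by simp
qed

lemma t1_lower:
  assumes "\<tau> \<in> F2" shows "Im (\<tau>$1$1) \<ge> 43/50"
proof -
  have n: "cmod (\<tau>$1$1) \<ge> 1" by (rule tau11_ge1[OF assms])
  have r: "\<bar>Re (\<tau>$1$1)\<bar> \<le> 1/2" and i: "Im (\<tau>$1$1) \<ge> 0"
    using assms by (auto simp: F2_def)
  have "1 \<le> (cmod (\<tau>$1$1))^2" using n by (metis one_le_power)
  also have "\<dots> = (Re (\<tau>$1$1))^2 + (Im (\<tau>$1$1))^2" by (simp add: cmod_power2)
  finally have *: "1 \<le> (Re (\<tau>$1$1))^2 + (Im (\<tau>$1$1))^2" .
  have "\<bar>Re (\<tau>$1$1)\<bar>^2 \<le> (1/2)^2" using r by (intro power_mono) auto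
  then have "(Re (\<tau>$1$1))^2 \<le> 1/4" by (simp add: power2_eq_square)
  then have "(43/50)^2 \<le> (Im (\<tau>$1$1))^2" using * by (simp add: power2_eq_square)
  then show ?thesis using i by (rule power2_le_imp_le)
qed

lemma inv_apply:
  fixes T :: "real^2^2"
  assumes "det T \<noteq> 0"
  shows "matrix_inv T *v (T *v y) = y"
proof -
  have "invertible T" using assms by (simp add: invertible_det_nz)
  then have "\<exists>A'. T ** A' = mat 1 \<and> A' ** T = mat 1" by (simp add: invertible_def)
  then have "T ** matrix_inv T = mat 1 \<and> matrix_inv T ** T = mat 1"
    unfolding matrix_inv_def by (rule someI_ex)
  then show ?thesis by (simp add: matrix_vector_mul_assoc)
qed



lemma cmod_tau_bound:
  assumes "\<bar>Re z\<bar> \<le> 1/2" "Im z \<ge> 0"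
  shows "cmod z \<le> 1/2 + Im z"
  using cmod_le[of z] assms by linarith

lemma D_bound:
  fixes z11 z12 z22 :: complex and w1 w2 y1 y2 x1 x2 \<nu> t1 t2 t12 :: real
  assumes m11: "cmod z11 \<le> 1/2 + t1" and m12: "cmod z12 \<le> 1/2 + t12" and m22: "cmod z22 \<le> 1/2 + t2"
    and t: "0 \<le> t12" "2*t12 \<le> t1" "t1 \<le> t2"
    and xy: "\<bar>x1\<bar> \<le> \<nu>" "\<bar>x2\<bar> \<le> \<nu>" "\<bar>y1\<bar> \<le> \<nu>" "\<bar>y2\<bar> \<le> \<nu>" and nu: "\<nu> \<le> 1/2"
  shows "cmod (of_real w1 * (z11 * of_real y1 + z12 * of_real y2) + of_real w2 * (z12 * of_real y1 + z22 * of_real y2)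
          + 1/2 * (of_real y1 * z11 * of_real y1 + 2 * (of_real y1 * z12 * of_real y2) + of_real y2 * z22 * of_real y2)
          + of_real (w1*x1 + w2*x2 + y1*x1 + y2*x2 + y2/2))
       \<le> \<nu> * (2 + (t1 + t2)) * (1 + \<bar>w1\<bar> + \<bar>w2\<bar>)"
proof -
  let ?Tr = "t1 + t2"
  have nu0: "\<nu> \<ge> 0" using xy by linarith
  have n11: "cmod z11 \<ge> 0" "cmod z12 \<ge> 0" "cmod z22 \<ge> 0" by auto
  have a1: "cmod (z11 * of_real y1 + z12 * of_real y2) \<le> \<nu> * (1 + ?Tr)"
  proof -
    have "cmod (z11 * of_real y1 + z12 * of_real y2) \<le> cmod z11 * \<bar>y1\<bar> + cmod z12 * \<bar>y2\<bar>"
      by (metis norm_mult norm_of_real norm_triangle_ineq)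
    also have "\<dots> \<le> (1/2 + t1) * \<nu> + (1/2 + t12) * \<nu>"
      by (intro add_mono mult_mono m11 m12 xy) (use t in auto)
    also have "\<dots> \<le> \<nu> * (1 + ?Tr)" using t nu0 by (simp add: algebra_simps mult_left_mono)
    finally show ?thesis .
  qed
  have a2: "cmod (z12 * of_real y1 + z22 * of_real y2) \<le> \<nu> * (1 + ?Tr)"
  proof -
    have "cmod (z12 * of_real y1 + z22 * of_real y2) \<le> cmod z12 * \<bar>y1\<bar> + cmod z22 * \<bar>y2\<bar>"
      by (metis norm_mult norm_of_real norm_triangle_ineq)
    also have "\<dots> \<le> (1/2 + t12) * \<nu> + (1/2 + t2) * \<nu>"
      by (intro add_mono mult_mono m22 m12 xy) (use t in auto)
    also have "\<dots> \<le> \<nu> * (1 + ?Tr)" using t nu0 by (simp add: algebra_simps mult_left_mono)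
    finally show ?thesis .
  qed
  have b1: "cmod (of_real w1 * (z11 * of_real y1 + z12 * of_real y2)) \<le> \<bar>w1\<bar> * (\<nu> * (1 + ?Tr))"
    using a1 by (simp add: norm_mult mult_left_mono)
  have b2: "cmod (of_real w2 * (z12 * of_real y1 + z22 * of_real y2)) \<le> \<bar>w2\<bar> * (\<nu> * (1 + ?Tr))"
    using a2 by (simp add: norm_mult mult_left_mono)
  have yy: "\<bar>y1\<bar> * \<bar>y1\<bar> \<le> \<nu> * \<nu>" "\<bar>y1\<bar> * \<bar>y2\<bar> \<le> \<nu> * \<nu>" "\<bar>y2\<bar> * \<bar>y2\<bar> \<le> \<nu> * \<nu>"
    by (rule mult_mono; use xy nu0 in simp)+
  have b3: "cmod (1/2 * (of_real y1 * z11 * of_real y1 + 2 * (of_real y1 * z12 * of_real y2) + of_real y2 * z22 * of_real y2))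
      \<le> 1/2 * (\<nu> * (1 + ?Tr))"
  proof -
    have "cmod (of_real y1 * z11 * of_real y1 + 2 * (of_real y1 * z12 * of_real y2) + of_real y2 * z22 * of_real y2)
       \<le> cmod (of_real y1 * z11 * of_real y1) + cmod (2 * (of_real y1 * z12 * of_real y2)) + cmod (of_real y2 * z22 * of_real y2)"
      by (meson norm_triangle_ineq order_trans add_mono order_refl)
    also have "\<dots> = (\<bar>y1\<bar> * \<bar>y1\<bar>) * cmod z11 + 2 * ((\<bar>y1\<bar> * \<bar>y2\<bar>) * cmod z12) + (\<bar>y2\<bar> * \<bar>y2\<bar>) * cmod z22"
      by (simp add: norm_mult algebra_simps)
    also have "\<dots> \<le> (\<nu>*\<nu>) * (1/2 + t1) + 2 * ((\<nu>*\<nu>) * (1/2 + t12)) + (\<nu>*\<nu>) * (1/2 + t2)"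
      by (intro add_mono mult_mono mult_left_mono yy m11 m12 m22) (use t in auto)
    also have "\<dots> = (\<nu>*\<nu>) * (2 + t1 + t2 + 2*t12)" by (simp add: algebra_simps)
    also have "\<dots> \<le> (\<nu>*\<nu>) * (2 + 2*?Tr)" using t by (intro mult_left_mono) auto
    also have "\<dots> \<le> (\<nu> * (1/2)) * (2 + 2*?Tr)" using nu nu0 t by (intro mult_right_mono mult_left_mono) auto
    also have "\<dots> = \<nu> * (1 + ?Tr)" by (simp add: algebra_simps)
    finally show ?thesis by (simp add: norm_mult)
  qed
  have b4: "cmod (of_real (w1*x1 + w2*x2 + y1*x1 + y2*x2 + y2/2) :: complex) \<le> \<nu> * (\<bar>w1\<bar> + \<bar>w2\<bar>) + 3/2 * \<nu>"
  proof -
    have "\<bar>w1*x1 + w2*x2 + y1*x1 + y2*x2 + y2/2\<bar> \<le> \<bar>w1\<bar>*\<bar>x1\<bar> + \<bar>w2\<bar>*\<bar>x2\<bar> + \<bar>y1\<bar>*\<bar>x1\<bar> + \<bar>y2\<bar>*\<bar>x2\<bar> + \<bar>y2\<bar>/2"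
      by (simp add: abs_mult[symmetric])
    also have "\<dots> \<le> \<bar>w1\<bar>*\<nu> + \<bar>w2\<bar>*\<nu> + \<nu>*\<nu> + \<nu>*\<nu> + \<nu>/2"
      by (intro add_mono mult_mono mult_left_mono xy) (use xy in auto)
    also have "\<dots> \<le> \<bar>w1\<bar>*\<nu> + \<bar>w2\<bar>*\<nu> + \<nu>*(1/2) + \<nu>*(1/2) + \<nu>/2"
      using nu nu0 by (intro add_mono mult_left_mono) auto
    finally have r: "\<bar>w1*x1 + w2*x2 + y1*x1 + y2*x2 + y2/2\<bar> \<le> \<nu> * (\<bar>w1\<bar> + \<bar>w2\<bar>) + 3/2 * \<nu>" by (simp add: algebra_simps)
    show ?thesis unfolding norm_of_real by (rule r)
  qed
  have tri: "cmod (of_real w1 * (z11 * of_real y1 + z12 * of_real y2) + of_real w2 * (z12 * of_real y1 + z22 * of_real y2)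
          + 1/2 * (of_real y1 * z11 * of_real y1 + 2 * (of_real y1 * z12 * of_real y2) + of_real y2 * z22 * of_real y2)
          + of_real (w1*x1 + w2*x2 + y1*x1 + y2*x2 + y2/2))
     \<le> \<bar>w1\<bar> * (\<nu> * (1 + ?Tr)) + \<bar>w2\<bar> * (\<nu> * (1 + ?Tr)) + 1/2 * (\<nu> * (1 + ?Tr)) + (\<nu> * (\<bar>w1\<bar> + \<bar>w2\<bar>) + 3/2 * \<nu>)"
    using b1 b2 b3 b4 by (meson norm_triangle_ineq order_trans add_mono)
  have "\<bar>w1\<bar> * (\<nu> * (1 + ?Tr)) + \<bar>w2\<bar> * (\<nu> * (1 + ?Tr)) + 1/2 * (\<nu> * (1 + ?Tr)) + (\<nu> * (\<bar>w1\<bar> + \<bar>w2\<bar>) + 3/2 * \<nu>)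
     = \<nu> * (2 + ?Tr) * (1 + \<bar>w1\<bar> + \<bar>w2\<bar>) - 1/2 * (\<nu> * ?Tr)"
    by (simp add: algebra_simps)
  moreover have "\<nu> * ?Tr \<ge> 0" using nu0 t by simp
  ultimately show ?thesis using tri by linarith
qed



definition Qc :: "complex^2^2 \<Rightarrow> complex \<Rightarrow> complex \<Rightarrow> complex" where
  "Qc \<tau> p q = p * \<tau>$1$1 * p + p * \<tau>$1$2 * q + q * \<tau>$1$2 * p + q * \<tau>$2$2 * q"

lemma theta_term:
  fixes \<tau> :: "complex^2^2" and X Y :: "real^2" and n :: "int^2"
  assumes sym: "\<tau>$2$1 = \<tau>$1$2"
  shows "(let w = (\<lambda>i. of_int (n $ i) + complex_of_real ((vector [1/2, 1/2] :: real^2) $ i)) in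
      exp (2 * pi * \<i> * ((1/2) * (\<Sum>i\<in>UNIV. \<Sum>j\<in>UNIV. w i * \<tau> $ i $ j * w j)
                         + (\<Sum>i\<in>UNIV. w i * ((\<chi> i. complex_of_real (X $ i) + (\<Sum>j\<in>UNIV. \<tau> $ i $ j * complex_of_real (Y $ j))) $ i
                             + complex_of_real ((vector [0, 1/2] :: real^2) $ i)))))) =
     exp (2 * pi * \<i> * (-(1/2) * Qc \<tau> (of_real (Y$1)) (of_real (Y$2)) - (of_real (Y$1 * X$1 + Y$2 * (X$2 + 1/2)))))
     * exp (2 * pi * \<i> * (1/2 * Qc \<tau> (of_real (of_int (n$1) + 1/2 + Y$1)) (of_real (of_int (n$2) + 1/2 + Y$2))
            + of_real ((of_int (n$1) + 1/2 + Y$1) * X$1 + (of_int (n$2) + 1/2 + Y$2) * (X$2 + 1/2))))"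
proof -
  have "(let w = (\<lambda>i. of_int (n $ i) + complex_of_real ((vector [1/2, 1/2] :: real^2) $ i)) in
      exp (2 * pi * \<i> * ((1/2) * (\<Sum>i\<in>UNIV. \<Sum>j\<in>UNIV. w i * \<tau> $ i $ j * w j)
                         + (\<Sum>i\<in>UNIV. w i * ((\<chi> i. complex_of_real (X $ i) + (\<Sum>j\<in>UNIV. \<tau> $ i $ j * complex_of_real (Y $ j))) $ i
                             + complex_of_real ((vector [0, 1/2] :: real^2) $ i)))))) =
    exp (2 * pi * \<i> * ((1/2) * ((of_int (n$1) + 1/2) * \<tau>$1$1 * (of_int (n$1) + 1/2) + (of_int (n$1) + 1/2) * \<tau>$1$2 * (of_int (n$2) + 1/2)
      + ((of_int (n$2) + 1/2) * \<tau>$1$2 * (of_int (n$1) + 1/2) + (of_int (n$2) + 1/2) * \<tau>$2$2 * (of_int (n$2) + 1/2)))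
      + ((of_int (n$1) + 1/2) * (of_real (X$1) + (\<tau>$1$1 * of_real (Y$1) + \<tau>$1$2 * of_real (Y$2)) + 0)
       + (of_int (n$2) + 1/2) * (of_real (X$2) + (\<tau>$1$2 * of_real (Y$1) + \<tau>$2$2 * of_real (Y$2)) + 1/2))))"
    unfolding Let_def by (simp only: sum_2 vector_2 vec_lambda_beta sym of_real_divide of_real_1 of_real_numeral of_real_0)
  also have "\<dots> = exp (2 * pi * \<i> * (-(1/2) * Qc \<tau> (of_real (Y$1)) (of_real (Y$2)) - (of_real (Y$1 * X$1 + Y$2 * (X$2 + 1/2))))
     + 2 * pi * \<i> * (1/2 * Qc \<tau> (of_real (of_int (n$1) + 1/2 + Y$1)) (of_real (of_int (n$2) + 1/2 + Y$2))
            + of_real ((of_int (n$1) + 1/2 + Y$1) * X$1 + (of_int (n$2) + 1/2 + Y$2) * (X$2 + 1/2))))"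
    by (rule arg_cong[where f=exp]) (simp add: Qc_def, algebra)
  finally show ?thesis by (simp add: exp_add)
qed

lemma Re_arg:
  fixes \<tau> :: "complex^2^2" and p q r :: real
  shows "Re (2 * pi * \<i> * (1/2 * Qc \<tau> (of_real p) (of_real q) + of_real r))
       = - pi * (p * p * Im (\<tau>$1$1) + 2 * p * q * Im (\<tau>$1$2) + q * q * Im (\<tau>$2$2))"
  by (simp add: Qc_def algebra_simps)

lemma Re_arg':
  fixes \<tau> :: "complex^2^2" and p q r :: real
  shows "Re (2 * pi * \<i> * (-(1/2) * Qc \<tau> (of_real p) (of_real q) - of_real r))
       = pi * (p * p * Im (\<tau>$1$1) + 2 * p * q * Im (\<tau>$1$2) + q * q * Im (\<tau>$2$2))"
  by (simp add: Qc_def algebra_simps)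

lemma arg_diff:
  fixes \<tau> :: "complex^2^2" and w1 w2 y1 y2 x1 x2 :: real
  shows "2 * pi * \<i> * (1/2 * Qc \<tau> (of_real (w1 + y1)) (of_real (w2 + y2)) + of_real ((w1 + y1) * x1 + (w2 + y2) * (x2 + 1/2)))
       - 2 * pi * \<i> * (1/2 * Qc \<tau> (of_real w1) (of_real w2) + of_real (w2 * (1/2)))
     = 2 * pi * \<i> * (of_real w1 * (\<tau>$1$1 * of_real y1 + \<tau>$1$2 * of_real y2) + of_real w2 * (\<tau>$1$2 * of_real y1 + \<tau>$2$2 * of_real y2)
          + 1/2 * (of_real y1 * \<tau>$1$1 * of_real y1 + 2 * (of_real y1 * \<tau>$1$2 * of_real y2) + of_real y2 * \<tau>$2$2 * of_real y2)
          + of_real (w1*x1 + w2*x2 + y1*x1 + y2*x2 + y2/2))"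
  by (simp add: Qc_def, algebra)



lemma expQ_bound:
  fixes t1 t2 t12 p q :: real
  assumes "t12 \<ge> 0"
  shows "exp (-pi * (p * p * t1 + 2 * p * q * t12 + q * q * t2)) \<le> exp (-pi*(t1 - t12)*p^2) * exp (-pi*(t2 - t12)*q^2)"
proof -
  have "p * p * t1 + 2 * p * q * t12 + q * q * t2 = (t1 - t12)*p^2 + (t2 - t12)*q^2 + t12 * (p + q)^2"
    by (simp add: power2_eq_square algebra_simps)
  moreover have "t12 * (p + q)^2 \<ge> 0" using assms by simp
  ultimately have h: "(t1 - t12)*p^2 + (t2 - t12)*q^2 \<le> p * p * t1 + 2 * p * q * t12 + q * q * t2" by linarith
  have "pi * ((t1 - t12)*p^2 + (t2 - t12)*q^2) \<le> pi * (p * p * t1 + 2 * p * q * t12 + q * q * t2)"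
    using h by (rule mult_left_mono) simp
  then have "exp (-pi * (p * p * t1 + 2 * p * q * t12 + q * q * t2)) \<le> exp (- (pi * ((t1 - t12)*p^2 + (t2 - t12)*q^2)))"
    by simp
  also have "\<dots> = exp (-pi*(t1 - t12)*p^2) * exp (-pi*(t2 - t12)*q^2)"
    by (simp add: exp_add[symmetric] algebra_simps)
  finally show ?thesis .
qed

lemma C3_lower: "C3 Y \<ge> 32 + 53 * pi"
proof -
  have pi1: "pi \<le> 32/9" using pi_approx by simp
  have "9/4 \<le> 8 / pi" using pi1 pi_gt_zero by (simp add: field_simps)
  then have "9/4 \<le> (Y$1)^2 + 8/pi" by (simp add: add_increasing)
  then have "sqrt (9/4) \<le> sqrt ((Y$1)^2 + 8/pi)" by (rule real_sqrt_le_mono)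
  moreover have "sqrt (9/4::real) = 3/2" by (simp add: real_sqrt_divide)
  ultimately have s: "3/2 \<le> sqrt ((Y$1)^2 + 8/pi)" by simp
  then have "(7/2)^2 \<le> (sqrt ((Y$1)^2 + 8/pi) + 2)^2" by (intro power_mono) auto
  then have "8 * pi * (4 / pi + 0 + (1/2) * (7/2)^2 + 1/2)
      \<le> 8 * pi * (4 / pi + 2 * \<bar>Y $ 1\<bar> + (1/2) * (sqrt ((Y $ 1)^2 + 8 / pi) + 2)^2 + 1/2)"
    by (intro mult_left_mono add_mono) auto
  moreover have "8 * pi * (4 / pi + 0 + (1/2) * (7/2)^2 + 1/2) = 32 + 53 * pi"
    using pi_gt_zero by (simp add: field_simps power2_eq_square)
  moreover have "8 * pi * (4 / pi + 2 * \<bar>Y $ 1\<bar> + (1/2) * (sqrt ((Y $ 1)^2 + 8 / pi) + 2)^2 + 1/2) \<le> C3 Y"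
    unfolding C3_def by (rule Max_ge) auto
  ultimately show ?thesis by linarith
qed

lemma C3_upper:
  assumes "\<bar>Y$1\<bar> \<le> 1/2" "\<bar>Y$2\<bar> \<le> 1/2"
  shows "C3 Y \<le> 239.2"
  unfolding C3_def
proof (rule Max.boundedI)
  show "finite (range (\<lambda>i. 8 * pi * (4 / pi + 2 * \<bar>Y $ i\<bar> + 1 / 2 * (sqrt ((Y $ i)\<^sup>2 + 8 / pi) + 2)\<^sup>2 + 1 / 2)))" by simp
  show "range (\<lambda>i. 8 * pi * (4 / pi + 2 * \<bar>Y $ i\<bar> + 1 / 2 * (sqrt ((Y $ i)\<^sup>2 + 8 / pi) + 2)\<^sup>2 + 1 / 2)) \<noteq> {}" by simp
  fix v assume "v \<in> range (\<lambda>i. 8 * pi * (4 / pi + 2 * \<bar>Y $ i\<bar> + 1 / 2 * (sqrt ((Y $ i)\<^sup>2 + 8 / pi) + 2)\<^sup>2 + 1 / 2))"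
  then obtain i where v: "v = 8 * pi * (4 / pi + 2 * \<bar>Y $ i\<bar> + 1 / 2 * (sqrt ((Y $ i)\<^sup>2 + 8 / pi) + 2)\<^sup>2 + 1 / 2)" by auto
  define y where "y = Y $ i"
  have y: "\<bar>y\<bar> \<le> 1/2" using assms unfolding y_def using exhaust_2[of i] by auto
  have pi0: "pi > 0" by simp
  have pia: "pi \<le> 3.1416" using pi_approx by simp
  define s where "s = sqrt (y^2 + 8/pi)"
  have s0: "s \<ge> 0" unfolding s_def by simp
  have ss: "s^2 = y^2 + 8/pi" unfolding s_def using pi0 by (simp add: add_nonneg_nonneg)
  have y2: "y^2 \<le> 1/4" using y by (metis abs_le_square_iff power2_abs abs_of_nonneg half_gt_zero_iff less_eq_real_def zero_less_one
      real_sqrt_le_iff real_sqrt_abs real_sqrt_four real_sqrt_divide power_divide one_power2 power2_eq_square real_sqrt_one)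
  have "(pi * s)^2 = pi^2 * s^2" by (simp add: power_mult_distrib)
  also have "\<dots> = pi^2 * (y^2 + 8/pi)" by (simp add: ss)
  also have "\<dots> = pi^2 * y^2 + 8 * pi" using pi0 by (simp add: field_simps power2_eq_square)
  also have "\<dots> \<le> pi^2 * (1/4) + 8 * pi" using y2 by (intro add_mono mult_left_mono) auto
  also have "\<dots> \<le> 3.1416^2 * (1/4) + 8 * 3.1416" using pia pi0 by (intro add_mono mult_right_mono power_mono) auto
  also have "\<dots> \<le> 5.2536^2" by (simp add: power2_eq_square)
  finally have ps: "pi * s \<le> 5.2536" by (rule power2_le_imp_le) simp
  have "v = 8 * pi * (4 / pi + 2 * \<bar>y\<bar> + 1 / 2 * (s + 2)\<^sup>2 + 1 / 2)" by (simp add: v y_def s_def)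
  also have "\<dots> = 32 + 16 * pi * \<bar>y\<bar> + 4 * pi * s^2 + 16 * (pi * s) + 20 * pi"
    using pi0 by (simp add: field_simps power2_eq_square)
  also have "\<dots> = 64 + 16 * pi * \<bar>y\<bar> + 4 * pi * y^2 + 16 * (pi * s) + 20 * pi"
    using pi0 by (simp add: ss field_simps)
  also have "\<dots> \<le> 64 + 16 * pi * (1/2) + 4 * pi * (1/4) + 16 * 5.2536 + 20 * pi"
    using y y2 ps pi0 by (intro add_mono mult_left_mono) auto
  also have "\<dots> = 64 + 29 * pi + 16 * 5.2536" by simp
  also have "\<dots> \<le> 239.2" using pia by simp
  finally show "v \<le> 239.2" .
qed



lemma h0_sum_zero:
  fixes \<tau> :: "complex^2^2"
  defines "h0 \<equiv> (\<lambda>n::int^2. exp (2 * pi * \<i> * (1/2 * Qc \<tau> (of_real (of_int (n$1) + 1/2)) (of_real (of_int (n$2) + 1/2))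
                  + of_real ((of_int (n$2) + 1/2) * (1/2)))))"
  shows "infsum h0 UNIV = 0"
proof -
  define \<sigma> :: "int^2 \<Rightarrow> int^2" where "\<sigma> = (\<lambda>n. \<chi> i. - n$i - 1)"
  have inv: "\<And>n. \<sigma> (\<sigma> n) = n" by (simp add: \<sigma>_def vec_eq_iff)
  have odd: "h0 (\<sigma> n) = - h0 n" for n
  proof -
    define A where "A = 2 * pi * \<i> * (1/2 * Qc \<tau> (of_real (of_int (n$1) + 1/2)) (of_real (of_int (n$2) + 1/2)))"
    define B where "B = 2 * pi * \<i> * of_real ((of_int (n$2) + 1/2) * (1/2::real))"
    have e1: "h0 n = exp (A + B)" by (simp add: h0_def A_def B_def algebra_simps)
    have c1: "real_of_int ((\<sigma> n)$1) + 1/2 = -(real_of_int (n$1) + 1/2)"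
     and c2: "real_of_int ((\<sigma> n)$2) + 1/2 = -(real_of_int (n$2) + 1/2)" by (simp_all add: \<sigma>_def)
    have qn: "Qc \<tau> (of_real (-p)) (of_real (-q)) = Qc \<tau> (of_real p) (of_real q)" for p q
      by (simp add: Qc_def)
    have e2: "h0 (\<sigma> n) = exp (A - B)"
      unfolding h0_def A_def B_def c1 c2 qn by (rule arg_cong[where f=exp]) (simp add: algebra_simps)
    have "exp (2 * B) = exp (((2 * of_int (n$2) + 1) * pi) * \<i>)"
      by (simp add: B_def algebra_simps)
    also have "\<dots> = -1" by (rule exp_integer_2pi_plus1) simp
    finally have eB: "exp (2 * B) = -1" .
    have "exp (A + B) = exp (A - B) * exp (2 * B)" by (simp add: exp_add[symmetric] add.commute)
    then show ?thesis using e1 e2 eB by simp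
  qed
  have bij: "bij_betw \<sigma> UNIV UNIV" by (metis bij_betw_def inv inj_def surj_def)
  have "infsum h0 UNIV = infsum (\<lambda>n. h0 (\<sigma> n)) UNIV"
    by (rule infsum_reindex_bij_betw[OF bij, symmetric])
  also have "\<dots> = infsum (\<lambda>n. - h0 n) UNIV" by (simp add: odd)
  also have "\<dots> = - infsum h0 UNIV" by (rule infsum_uminus)
  finally show ?thesis by simp
qed



theorem mainTheorem10:
  fixes \<tau> :: "complex^2^2" and X Y :: "real^2"
  defines "Z \<equiv> (\<chi> i. complex_of_real (X $ i) + (\<Sum>j\<in>UNIV. \<tau> $ i $ j * complex_of_real (Y $ j)))"
  defines "a \<equiv> (vector [1/2, 1/2] :: real^2)"
  defines "b \<equiv> (vector [0, 1/2] :: real^2)"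
  defines "nrm \<equiv> max (max \<bar>X $ 1\<bar> \<bar>X $ 2\<bar>) (max \<bar>Y $ 1\<bar> \<bar>Y $ 2\<bar>)"
  assumes "\<tau> \<in> F2"
    and "(X, Y) \<noteq> (0, 0)"
    and "nrm \<le> 1/2"
    and "theta a b Z \<tau> \<noteq> 0"
  shows "- ln (cmod (theta a b Z \<tau>) *
            exp (- pi * (ImV Z \<bullet> (matrix_inv (ImM \<tau>) *v ImV Z))))
         \<ge> pi * (Im (\<tau> $ 1 $ 1) + Im (\<tau> $ 2 $ 2) - 2 * Im (\<tau> $ 1 $ 2))
              * (min (dZ (1/2 + Y $ 1)) (dZ (1/2 + Y $ 2)))^2
           - ln (4 + 3/2 * (Im (\<tau> $ 1 $ 1) + Im (\<tau> $ 2 $ 2)))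
           + ln (1 / nrm) - ln (C3 Y)
       \<and> C3 Y \<le> 239.2"
proof -
  have F: "\<tau> \<in> F2" and XY: "(X, Y) \<noteq> (0, 0)" and nle: "nrm \<le> 1/2" and thnz: "theta a b Z \<tau> \<noteq> 0"
    using assms by auto
  define t1 where "t1 = Im (\<tau>$1$1)"
  define t2 where "t2 = Im (\<tau>$2$2)"
  define t12 where "t12 = Im (\<tau>$1$2)"
  have sym: "\<tau>$2$1 = \<tau>$1$2"
  proof -
    have "transpose \<tau> = \<tau>" using F by (simp add: F2_def siegel_upper_def)
    then have "(transpose \<tau>)$1$2 = \<tau>$1$2" by simp
    then show ?thesis by (simp add: transpose_def)
  qed
  have ReB: "\<bar>Re (\<tau>$i$j)\<bar> \<le> 1/2" for i j using F by (simp add: F2_def)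
  have tt: "t1 \<le> t2" "2*t12 \<le> t1" "0 \<le> t12" using F unfolding F2_def t1_def t2_def t12_def by auto
  have t1l: "43/50 \<le> t1" using t1_lower[OF F] by (simp add: t1_def)
  define c1 where "c1 = t1 - t12"
  define c2 where "c2 = t2 - t12"
  have q1: "exp (-pi*c1) \<le> 3/10"
  proof -
    have c1l: "43/100 \<le> c1" using tt t1l by (simp add: c1_def)
    have pil: "314/100 \<le> pi" using pi_approx by simp
    have "(314/100) * (43/100) \<le> pi * c1" by (rule mult_mono[OF pil c1l]) auto
    then have "27/20 \<le> pi * c1" by simp
    have "(1 + (27/20) / real 8)^8 \<le> exp (27/20::real)"
      by (rule exp_ge_one_plus_x_over_n_power_n) auto
    moreover have "(10/3::real) \<le> (1 + (27/20) / real 8)^8" by (simp add: power_divide)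
    moreover have "exp (27/20::real) \<le> exp (pi * c1)" using \<open>27/20 \<le> pi * c1\<close> by simp
    ultimately have "10/3 \<le> exp (pi * c1)" by linarith
    then have "inverse (exp (pi * c1)) \<le> inverse (10/3)" by (intro le_imp_inverse_le) auto
    then show ?thesis by (simp add: exp_minus[symmetric])
  qed
  have q2: "exp (-pi*c2) \<le> 3/10"
  proof -
    have "c1 \<le> c2" using tt by (simp add: c1_def c2_def)
    then have "exp (-pi*c2) \<le> exp (-pi*c1)" by simp
    then show ?thesis using q1 by linarith
  qed
  have c0: "c1 \<ge> 0" "c2 \<ge> 0" using c_pos_of_q[OF q1] c_pos_of_q[OF q2] by auto
  have nu: "\<bar>X$1\<bar> \<le> nrm" "\<bar>X$2\<bar> \<le> nrm" "\<bar>Y$1\<bar> \<le> nrm" "\<bar>Y$2\<bar> \<le> nrm" by (simp_all add: nrm_def le_max_iff_disj)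
  have nu_pos: "nrm > 0"
  proof (rule ccontr)
    assume "\<not> nrm > 0"
    then have "X$1 = 0" "X$2 = 0" "Y$1 = 0" "Y$2 = 0" using nu by auto
    then have "X = 0" "Y = 0" by (simp_all add: vec_eq_iff forall_2)
    with XY show False by simp
  qed
  have y_half: "\<bar>Y$1\<bar> \<le> 1/2" "\<bar>Y$2\<bar> \<le> 1/2" using nu nle by auto
  define w1 where "w1 = (\<lambda>n::int^2. real_of_int (n$1) + 1/2)"
  define w2 where "w2 = (\<lambda>n::int^2. real_of_int (n$2) + 1/2)"
  define ph where "ph = (\<lambda>n. 2 * pi * \<i> * (1/2 * Qc \<tau> (of_real (w1 n + Y$1)) (of_real (w2 n + Y$2))
            + of_real ((w1 n + Y$1) * X$1 + (w2 n + Y$2) * (X$2 + 1/2))))"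
  define p0 where "p0 = (\<lambda>n. 2 * pi * \<i> * (1/2 * Qc \<tau> (of_real (w1 n)) (of_real (w2 n)) + of_real (w2 n * (1/2))))"
  define kk where "kk = 2 * pi * \<i> * (-(1/2) * Qc \<tau> (of_real (Y$1)) (of_real (Y$2)) - of_real (Y$1 * X$1 + Y$2 * (X$2 + 1/2)))"
  define h where "h = (\<lambda>n. exp (ph n))"
  define h0 where "h0 = (\<lambda>n. exp (p0 n))"
  have th: "theta a b Z \<tau> = exp kk * infsum h UNIV"
  proof -
    have "theta a b Z \<tau> = infsum (\<lambda>n. exp kk * h n) UNIV"
      unfolding theta_def Z_def a_def b_def h_def ph_def kk_def w1_def w2_def
      by (rule infsum_cong) (rule theta_term[OF sym])
    also have "\<dots> = exp kk * infsum h UNIV" by (rule infsum_cmult_right')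
    finally show ?thesis .
  qed
  have h0z: "infsum h0 UNIV = 0"
    unfolding h0_def p0_def w1_def w2_def by (rule h0_sum_zero)
  define QY where "QY = Y$1 * Y$1 * t1 + 2 * Y$1 * Y$2 * t12 + Y$2 * Y$2 * t2"
  have Rekk: "Re kk = pi * QY" unfolding kk_def QY_def t1_def t2_def t12_def by (rule Re_arg')
  have nK: "cmod (exp kk) = exp (pi * QY)" by (simp add: norm_exp_eq_Re Rekk)
  have IZ: "ImV Z = ImM \<tau> *v Y"
    by (simp add: vec_eq_iff forall_2 ImV_def ImM_def Z_def matrix_vector_mult_def sum_2)
  have detT: "det (ImM \<tau>) \<noteq> 0"
  proof -
    have d: "det (ImM \<tau>) = t1 * t2 - t12 * t12" by (simp add: det_2 ImM_def t1_def t2_def t12_def sym)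
    have "t12 * t12 \<le> (t1/2) * t2" using tt by (intro mult_mono) auto
    moreover have "(t1/2) * t2 < t1 * t2" using tt t1l by (simp add: mult_strict_right_mono)
    ultimately show ?thesis unfolding d by linarith
  qed
  have quad: "ImV Z \<bullet> (matrix_inv (ImM \<tau>) *v ImV Z) = QY"
  proof -
    have "matrix_inv (ImM \<tau>) *v ImV Z = Y" unfolding IZ by (rule inv_apply[OF detT])
    then show ?thesis unfolding IZ
      by (simp add: inner_vec_def sum_2 matrix_vector_mult_def ImM_def QY_def t1_def t2_def t12_def sym algebra_simps)
  qed
  have LHS: "cmod (theta a b Z \<tau>) * exp (- pi * (ImV Z \<bullet> (matrix_inv (ImM \<tau>) *v ImV Z))) = cmod (infsum h UNIV)"
  proof -
    have "cmod (theta a b Z \<tau>) * exp (- pi * QY) = exp (pi * QY) * exp (- pi * QY) * cmod (infsum h UNIV)"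
      by (simp add: th norm_mult nK Rekk)
    also have "exp (pi * QY) * exp (- pi * QY) = 1" by (simp add: exp_add[symmetric])
    finally show ?thesis by (simp add: quad)
  qed

  define Tr where "Tr = t1 + t2"
  have Tr0: "Tr \<ge> 0" using tt t1l by (simp add: Tr_def)
  define u1 where "u1 = (\<lambda>n::int^2. real_of_int (n$1) + (1/2 + Y$1))"
  define u2 where "u2 = (\<lambda>n::int^2. real_of_int (n$2) + (1/2 + Y$2))"
  have wu1: "w1 n + Y$1 = u1 n" for n by (simp add: w1_def u1_def)
  have wu2: "w2 n + Y$2 = u2 n" for n by (simp add: w2_def u2_def)
  define ru where "ru = (\<lambda>n. exp (-pi*c1*(u1 n)^2) * exp (-pi*c2*(u2 n)^2))"
  define rw where "rw = (\<lambda>n. exp (-pi*c1*(w1 n)^2) * exp (-pi*c2*(w2 n)^2))"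
  have ru0: "ru n \<ge> 0" for n by (simp add: ru_def)
  have rw0: "rw n \<ge> 0" for n by (simp add: rw_def)
  have Reph: "exp (Re (ph n)) \<le> ru n" for n
  proof -
    have "Re (ph n) = - pi * (u1 n * u1 n * t1 + 2 * u1 n * u2 n * t12 + u2 n * u2 n * t2)"
      unfolding ph_def wu1 wu2 t1_def t2_def t12_def by (rule Re_arg)
    then have "exp (Re (ph n)) = exp (- pi * (u1 n * u1 n * t1 + 2 * u1 n * u2 n * t12 + u2 n * u2 n * t2))" by simp
    also have "\<dots> \<le> ru n" unfolding ru_def c1_def c2_def by (rule expQ_bound) (rule tt(3))
    finally show ?thesis .
  qed
  have Rep0: "exp (Re (p0 n)) \<le> rw n" for n
  proof -
    have "Re (p0 n) = - pi * (w1 n * w1 n * t1 + 2 * w1 n * w2 n * t12 + w2 n * w2 n * t2)"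
      unfolding p0_def t1_def t2_def t12_def by (rule Re_arg)
    then have "exp (Re (p0 n)) = exp (- pi * (w1 n * w1 n * t1 + 2 * w1 n * w2 n * t12 + w2 n * w2 n * t2))" by simp
    also have "\<dots> \<le> rw n" unfolding rw_def c1_def c2_def by (rule expQ_bound) (rule tt(3))
    finally show ?thesis .
  qed
  have nh: "norm (h n) \<le> ru n" for n using Reph[of n] by (simp add: h_def norm_exp_eq_Re)
  have nh0: "norm (h0 n) \<le> rw n" for n using Rep0[of n] by (simp add: h0_def norm_exp_eq_Re)
  define B0 :: real where "B0 = 230/91"
  define B1 :: real where "B1 = 30/49 + 5/7 + 10000/8281"
  define KA where "KA = 2 * B0^2 + 2 * B0 * B1"
  define KB where "KB = 1 * B0^2 + 2 * B0 * B1"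
  define EU where "EU = exp (-pi*c1*(dZ (1/2 + Y$1))^2) * exp (-pi*c2*(dZ (1/2 + Y$2))^2)"
  define EW where "EW = exp (-pi*c1*(dZ (1/2))^2) * exp (-pi*c2*(dZ (1/2))^2)"
  have SA: "(\<Sum>n\<in>F. (2 + \<bar>u1 n\<bar> + \<bar>u2 n\<bar>) * ru n) \<le> KA * EU" if "finite F" for F
    unfolding u1_def u2_def ru_def KA_def EU_def B0_def B1_def
    by (rule two_dim_bound[OF that q1 q2]) simp
  have SB: "(\<Sum>n\<in>F. (1 + \<bar>w1 n\<bar> + \<bar>w2 n\<bar>) * rw n) \<le> KB * EW" if "finite F" for F
    unfolding w1_def w2_def rw_def KB_def EW_def B0_def B1_def
    by (rule two_dim_bound[OF that q1 q2]) simp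
  have ru_sum: "ru summable_on UNIV"
  proof (rule nonneg_bdd_above_summable_on)
    show "\<And>x. x \<in> UNIV \<Longrightarrow> 0 \<le> ru x" by (rule ru0)
    show "bdd_above (sum ru ` {F. F \<subseteq> UNIV \<and> finite F})"
    proof (rule bdd_aboveI2)
      fix F assume "F \<in> {F. F \<subseteq> (UNIV::(int^2) set) \<and> finite F}"
      then have fin: "finite F" by simp
      have "sum ru F \<le> (\<Sum>n\<in>F. (2 + \<bar>u1 n\<bar> + \<bar>u2 n\<bar>) * ru n)"
      proof (rule sum_mono)
        fix n show "ru n \<le> (2 + \<bar>u1 n\<bar> + \<bar>u2 n\<bar>) * ru n"
          using ru0[of n] by (simp add: mult_le_cancel_right1 algebra_simps add_nonneg_nonneg)
      qed
      also have "\<dots> \<le> KA * EU" by (rule SA[OF fin])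
      finally show "sum ru F \<le> KA * EU" .
    qed
  qed
  have rw_sum: "rw summable_on UNIV"
  proof (rule nonneg_bdd_above_summable_on)
    show "\<And>x. x \<in> UNIV \<Longrightarrow> 0 \<le> rw x" by (rule rw0)
    show "bdd_above (sum rw ` {F. F \<subseteq> UNIV \<and> finite F})"
    proof (rule bdd_aboveI2)
      fix F assume "F \<in> {F. F \<subseteq> (UNIV::(int^2) set) \<and> finite F}"
      then have fin: "finite F" by simp
      have "sum rw F \<le> (\<Sum>n\<in>F. (1 + \<bar>w1 n\<bar> + \<bar>w2 n\<bar>) * rw n)"
      proof (rule sum_mono)
        fix n show "rw n \<le> (1 + \<bar>w1 n\<bar> + \<bar>w2 n\<bar>) * rw n"
          using rw0[of n] by (simp add: mult_le_cancel_right1 algebra_simps add_nonneg_nonneg)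
      qed
      also have "\<dots> \<le> KB * EW" by (rule SB[OF fin])
      finally show "sum rw F \<le> KB * EW" .
    qed
  qed
  have nh_sum: "(\<lambda>n. norm (h n)) summable_on UNIV"
    by (rule summable_on_comparison_test[OF ru_sum]) (auto simp: nh)
  have nh0_sum: "(\<lambda>n. norm (h0 n)) summable_on UNIV"
    by (rule summable_on_comparison_test[OF rw_sum]) (auto simp: nh0)
  have h_sum: "h summable_on UNIV" by (rule abs_summable_summable[OF nh_sum])
  have h0_sum: "h0 summable_on UNIV" by (rule abs_summable_summable[OF nh0_sum])
  have nd_sum: "(\<lambda>n. norm (h n - h0 n)) summable_on UNIV"
  proof (rule summable_on_comparison_test[OF summable_on_add[OF ru_sum rw_sum]])
    fix n :: "int^2"
    have "norm (h n - h0 n) \<le> norm (h n) + norm (h0 n)" by (rule norm_triangle_ineq4)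
    then show "norm (h n - h0 n) \<le> ru n + rw n" using nh[of n] nh0[of n] by linarith
  qed simp
  have diff: "infsum h UNIV = infsum (\<lambda>n. h n - h0 n) UNIV"
  proof -
    have "infsum (\<lambda>n. h n + - h0 n) UNIV = infsum h UNIV + infsum (\<lambda>n. - h0 n) UNIV"
      by (rule infsum_add[OF h_sum]) (simp add: summable_on_uminus h0_sum)
    then show ?thesis using h0z by (simp add: infsum_uminus)
  qed
  have bnd1: "cmod (infsum h UNIV) \<le> infsum (\<lambda>n. norm (h n - h0 n)) UNIV"
    unfolding diff by (rule norm_infsum_bound) (rule nd_sum)
  define Cst where "Cst = 2 * pi * nrm * (2 + Tr)"
  have Cst0: "Cst \<ge> 0" using nu_pos Tr0 by (simp add: Cst_def)
  have pw: "norm (h n - h0 n) \<le> Cst * ((2 + \<bar>u1 n\<bar> + \<bar>u2 n\<bar>) * ru n + (1 + \<bar>w1 n\<bar> + \<bar>w2 n\<bar>) * rw n)" for n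
  proof -
    have e: "norm (h n - h0 n) \<le> cmod (ph n - p0 n) * (exp (Re (ph n)) + exp (Re (p0 n)))"
      unfolding h_def h0_def by (rule exp_diff_bound)
    have m11: "cmod (\<tau>$1$1) \<le> 1/2 + t1" unfolding t1_def by (rule cmod_tau_bound[OF ReB]) (use tt t1l in \<open>simp add: t1_def\<close>)
    have m12: "cmod (\<tau>$1$2) \<le> 1/2 + t12" unfolding t12_def by (rule cmod_tau_bound[OF ReB]) (use tt in \<open>simp add: t12_def\<close>)
    have m22: "cmod (\<tau>$2$2) \<le> 1/2 + t2" unfolding t2_def by (rule cmod_tau_bound[OF ReB]) (use tt t1l in \<open>simp add: t2_def\<close>)
    have "ph n - p0 n = 2 * pi * \<i> * (of_real (w1 n) * (\<tau>$1$1 * of_real (Y$1) + \<tau>$1$2 * of_real (Y$2)) + of_real (w2 n) * (\<tau>$1$2 * of_real (Y$1) + \<tau>$2$2 * of_real (Y$2))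
          + 1/2 * (of_real (Y$1) * \<tau>$1$1 * of_real (Y$1) + 2 * (of_real (Y$1) * \<tau>$1$2 * of_real (Y$2)) + of_real (Y$2) * \<tau>$2$2 * of_real (Y$2))
          + of_real (w1 n * X$1 + w2 n * X$2 + Y$1 * X$1 + Y$2 * X$2 + Y$2/2))"
      unfolding ph_def p0_def by (rule arg_diff)
    then have "cmod (ph n - p0 n) = 2 * pi * cmod (of_real (w1 n) * (\<tau>$1$1 * of_real (Y$1) + \<tau>$1$2 * of_real (Y$2)) + of_real (w2 n) * (\<tau>$1$2 * of_real (Y$1) + \<tau>$2$2 * of_real (Y$2))
          + 1/2 * (of_real (Y$1) * \<tau>$1$1 * of_real (Y$1) + 2 * (of_real (Y$1) * \<tau>$1$2 * of_real (Y$2)) + of_real (Y$2) * \<tau>$2$2 * of_real (Y$2))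
          + of_real (w1 n * X$1 + w2 n * X$2 + Y$1 * X$1 + Y$2 * X$2 + Y$2/2))"
      by (simp add: norm_mult)
    also have "\<dots> \<le> 2 * pi * (nrm * (2 + (t1 + t2)) * (1 + \<bar>w1 n\<bar> + \<bar>w2 n\<bar>))"
      by (intro mult_left_mono D_bound[OF m11 m12 m22 tt(3) tt(2) tt(1) nu nle]) simp
    finally have d: "cmod (ph n - p0 n) \<le> Cst * (1 + \<bar>w1 n\<bar> + \<bar>w2 n\<bar>)" by (simp add: Cst_def Tr_def algebra_simps)
    have wle: "1 + \<bar>w1 n\<bar> + \<bar>w2 n\<bar> \<le> 2 + \<bar>u1 n\<bar> + \<bar>u2 n\<bar>"
      using y_half wu1[of n] wu2[of n] by linarith
    have "norm (h n - h0 n) \<le> (Cst * (1 + \<bar>w1 n\<bar> + \<bar>w2 n\<bar>)) * (ru n + rw n)"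
      using e d Reph[of n] Rep0[of n] by (meson add_mono mult_mono norm_ge_zero order_trans exp_ge_zero add_nonneg_nonneg)
    also have "\<dots> = Cst * ((1 + \<bar>w1 n\<bar> + \<bar>w2 n\<bar>) * ru n + (1 + \<bar>w1 n\<bar> + \<bar>w2 n\<bar>) * rw n)"
      by (simp add: algebra_simps)
    also have "\<dots> \<le> Cst * ((2 + \<bar>u1 n\<bar> + \<bar>u2 n\<bar>) * ru n + (1 + \<bar>w1 n\<bar> + \<bar>w2 n\<bar>) * rw n)"
    proof -
      have "(1 + \<bar>w1 n\<bar> + \<bar>w2 n\<bar>) * ru n \<le> (2 + \<bar>u1 n\<bar> + \<bar>u2 n\<bar>) * ru n" by (rule mult_right_mono[OF wle ru0])
      then show ?thesis using Cst0 by (intro mult_left_mono) simp_all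
    qed
    finally show ?thesis .
  qed
  have bnd2: "infsum (\<lambda>n. norm (h n - h0 n)) UNIV \<le> Cst * (KA * EU + KB * EW)"
  proof (rule infsum_le_finite_sums[OF nd_sum])
    fix F :: "(int^2) set" assume fin: "finite F"
    have "sum (\<lambda>n. norm (h n - h0 n)) F \<le> (\<Sum>n\<in>F. Cst * ((2 + \<bar>u1 n\<bar> + \<bar>u2 n\<bar>) * ru n + (1 + \<bar>w1 n\<bar> + \<bar>w2 n\<bar>) * rw n))"
      by (rule sum_mono) (rule pw)
    also have "\<dots> = Cst * ((\<Sum>n\<in>F. (2 + \<bar>u1 n\<bar> + \<bar>u2 n\<bar>) * ru n) + (\<Sum>n\<in>F. (1 + \<bar>w1 n\<bar> + \<bar>w2 n\<bar>) * rw n))"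
      by (simp only: sum.distrib[symmetric] sum_distrib_left)
    also have "\<dots> \<le> Cst * (KA * EU + KB * EW)"
      using SA[OF fin] SB[OF fin] Cst0 by (intro mult_left_mono add_mono) auto
    finally show "sum (\<lambda>n. norm (h n - h0 n)) F \<le> Cst * (KA * EU + KB * EW)" .
  qed
  define \<delta> where "\<delta> = min (dZ (1/2 + Y $ 1)) (dZ (1/2 + Y $ 2))"
  define Ed where "Ed = exp (-pi*c1*\<delta>^2) * exp (-pi*c2*\<delta>^2)"
  have emono: "exp (-pi*c*d'^2) \<le> exp (-pi*c*d^2)" if "0 \<le> d" "d \<le> d'" "0 \<le> c" for c d d' :: real
  proof -
    have "d^2 \<le> d'^2" using that by (intro power_mono) auto
    then have "pi * c * d^2 \<le> pi * c * d'^2" using that by (intro mult_left_mono) auto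
    then show ?thesis by simp
  qed
  have d0: "0 \<le> \<delta>" using dZ_nonneg by (simp add: \<delta>_def)
  have EU_le: "EU \<le> Ed"
    unfolding EU_def Ed_def
    by (intro mult_mono emono d0 c0) (auto simp: \<delta>_def)
  have dh: "\<delta> \<le> dZ (1/2)" using dZ_le_half[OF y_half(1)] dZ_half by (simp add: \<delta>_def min_le_iff_disj)
  have EW_le: "EW \<le> Ed"
    unfolding EW_def Ed_def
    by (intro mult_mono emono d0 c0 dh) auto
  have KAB: "KA + KB \<le> 45" by (simp add: KA_def KB_def B0_def B1_def power2_eq_square)
  have KA0: "KA \<ge> 0" "KB \<ge> 0" by (simp_all add: KA_def KB_def B0_def B1_def)
  have Ed0: "Ed > 0" by (simp add: Ed_def)
  have S_le: "cmod (infsum h UNIV) \<le> Cst * (45 * Ed)"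
  proof -
    have "KA * EU + KB * EW \<le> KA * Ed + KB * Ed" using EU_le EW_le KA0 by (intro add_mono mult_left_mono) auto
    also have "\<dots> \<le> 45 * Ed" using KAB Ed0 by (simp add: distrib_right[symmetric])
    finally have "KA * EU + KB * EW \<le> 45 * Ed" .
    then have "Cst * (KA * EU + KB * EW) \<le> Cst * (45 * Ed)" using Cst0 by (rule mult_left_mono)
    then show ?thesis using bnd1 bnd2 by linarith
  qed
  have C3l: "C3 Y \<ge> 32 + 53 * pi" by (rule C3_lower)
  have pia: "pi \<le> 63/20" using pi_approx by simp
  have num: "90 * pi * (2 + Tr) \<le> (4 + 3/2 * Tr) * C3 Y"
  proof -
    have "pi * Tr \<le> 63/20 * Tr" using pia Tr0 by (rule mult_right_mono)
    moreover have "90 * pi * (2 + Tr) = 180 * pi + 90 * (pi * Tr)" by (simp add: algebra_simps)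
    moreover have "(4 + 3/2 * Tr) * (32 + 53 * pi) = 128 + 212 * pi + 48 * Tr + 159/2 * (pi * Tr)" by (simp add: algebra_simps)
    ultimately have "90 * pi * (2 + Tr) \<le> (4 + 3/2 * Tr) * (32 + 53 * pi)" using Tr0 pi_gt3 by linarith
    also have "\<dots> \<le> (4 + 3/2 * Tr) * C3 Y" using C3l Tr0 by (intro mult_left_mono) auto
    finally show ?thesis .
  qed
  define G where "G = (4 + 3/2 * Tr) * nrm * C3 Y * Ed"
  have SG: "cmod (infsum h UNIV) \<le> G"
  proof -
    have "Cst * (45 * Ed) = (90 * pi * (2 + Tr)) * nrm * Ed" by (simp add: Cst_def algebra_simps)
    also have "\<dots> \<le> ((4 + 3/2 * Tr) * C3 Y) * nrm * Ed"
      using num nu_pos Ed0 by (intro mult_right_mono) auto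
    also have "\<dots> = G" by (simp add: G_def algebra_simps)
    finally show ?thesis using S_le by linarith
  qed
  have S0: "cmod (infsum h UNIV) > 0" using thnz th by auto
  have C3p: "C3 Y > 0" using C3l pi_gt3 by linarith
  have T4: "4 + 3/2 * Tr > 0" using Tr0 by linarith
  have lnG: "ln G = ln (4 + 3/2 * Tr) + ln nrm + ln (C3 Y) - pi * (t1 + t2 - 2 * t12) * \<delta>^2"
  proof -
    have "ln G = ln (4 + 3/2 * Tr) + ln nrm + ln (C3 Y) + ln Ed"
      unfolding G_def using T4 nu_pos C3p Ed0 by (simp add: ln_mult)
    moreover have "ln Ed = - pi * (t1 + t2 - 2 * t12) * \<delta>^2"
      unfolding Ed_def by (simp add: exp_add[symmetric] c1_def c2_def algebra_simps)
    ultimately show ?thesis by simp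
  qed
  have G0: "G > 0" using SG S0 by linarith
  have "ln (cmod (infsum h UNIV)) \<le> ln G" using SG S0 G0 by (subst ln_le_cancel_iff) auto
  then have main: "- ln (cmod (infsum h UNIV)) \<ge> - ln G" by simp
  have l1: "ln (1 / nrm) = - ln nrm" using nu_pos by (simp add: ln_div)
  show ?thesis
    unfolding LHS t1_def[symmetric] t2_def[symmetric] t12_def[symmetric] \<delta>_def[symmetric]
    using main lnG l1 C3_upper[OF y_half] by (simp add: Tr_def)
qed

end
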